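(* Let $q>0$, $R>0$. For $(\eta,\sigma)\in\mathbb{R}^2$ let $(\varphi,\tilde\varphi)$ solve on $[0,R]$ $$d\varphi=\tilde\varphi\,dx,\qquad d\tilde\varphi=(\eta^2-q)\varphi\,dx-\sigma\varphi\,dW_x,\qquad\varphi(0)=1,\ \tilde\varphi(0)=\eta,$$ and set $F(\eta,\sigma):=\tilde\varphi(R)+\eta\varphi(R)$. If $\eta_0\in(0,\sqrt q)$ satisfies $F(\eta_0,0)=0$, then $\partial_\eta F(\eta_0,0)\neq0$; explicitly, with $c_0=\sqrt{q-\eta_0^2}$, $$\partial_\eta F(\eta_0,0)=\cos(c_0R)\Big[2+\eta_0R-\frac{\eta_0^3R}{c_0^2}\Big]+\sin(c_0R)\Big[\frac{3\eta_0+2\eta_0^2R}{c_0}+\frac{\eta_0^3}{c_0^3}\Big]\neq0 .$$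
   Context: $W$ is a standard real Brownian motion. At $\sigma=0$, $\varphi(x)=\cos(cx)+\frac{\eta}{c}\sin(cx)$ with $c=\sqrt{q-\eta^2}$; zeros $\eta_0\in(0,\sqrt q)$ of $F(\cdot,0)$ are the soliton parameters of the KdV equation $\partial_tU+6U\partial_xU+\partial_x^3U=0$ with initial datum $q\mathbf{1}_{[0,R]}$ (eigenvalues $\zeta=i\eta_0$ of $\varphi''+(U_0+\zeta^2)\varphi=0$). *)

theory Defs
  imports Complex_Main
begin

text \<open>Solution family of the sigma = 0 system on [0,R]:
  phi' = psi, psi' = (eta^2 - q) phi, phi(0) = 1, psi(0) = eta (for each eta).\<close>
definition is_sol0 :: "real \<Rightarrow> real \<Rightarrow> (real \<Rightarrow> real \<Rightarrow> real) \<Rightarrow> (real \<Rightarrow> real \<Rightarrow> real) \<Rightarrow> bool" where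
  "is_sol0 q R \<phi> \<psi> \<longleftrightarrow> (\<forall>\<eta>.
      \<phi> \<eta> 0 = 1 \<and> \<psi> \<eta> 0 = \<eta> \<and>
      (\<forall>x\<in>{0..R}. (\<phi> \<eta> has_real_derivative \<psi> \<eta> x) (at x within {0..R}) \<and>
                   (\<psi> \<eta> has_real_derivative (\<eta>\<^sup>2 - q) * \<phi> \<eta> x) (at x within {0..R})))"

definition F0 :: "real \<Rightarrow> (real \<Rightarrow> real \<Rightarrow> real) \<Rightarrow> (real \<Rightarrow> real \<Rightarrow> real) \<Rightarrow> real \<Rightarrow> real" where
  "F0 R \<phi> \<psi> \<eta> = \<psi> \<eta> R + \<eta> * \<phi> \<eta> R"

end

theory Submission imports Defs "HOL-Analysis.Analysis" begin

lemma uniq: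
  fixes q R \<eta> c :: real and \<phi> \<psi> :: "real \<Rightarrow> real \<Rightarrow> real"
  assumes R: "R \<ge> 0" and sol: "is_sol0 q R \<phi> \<psi>" and c: "c > 0" "c\<^sup>2 = q - \<eta>\<^sup>2"
  shows "\<phi> \<eta> R = cos (c*R) + \<eta>/c * sin (c*R) \<and> \<psi> \<eta> R = \<eta> * cos (c*R) - c * sin (c*R)"
proof -
  define f where "f x = \<phi> \<eta> x - (cos (c*x) + \<eta>/c * sin (c*x))" for x
  define g where "g x = \<psi> \<eta> x - (\<eta> * cos (c*x) - c * sin (c*x))" for x
  define E where "E x = c\<^sup>2 * (f x)\<^sup>2 + (g x)\<^sup>2" for x
  have s0: "\<phi> \<eta> 0 = 1" "\<psi> \<eta> 0 = \<eta>" using sol unfolding is_sol0_def by auto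
  have qq: "q = \<eta>\<^sup>2 + c\<^sup>2" using c by simp
  have dE: "(E has_real_derivative 0) (at x within {0..R})" if x: "x \<in> {0..R}" for x
  proof -
    have d1: "(\<phi> \<eta> has_real_derivative \<psi> \<eta> x) (at x within {0..R})"
     and d2: "(\<psi> \<eta> has_real_derivative (\<eta>\<^sup>2 - q) * \<phi> \<eta> x) (at x within {0..R})"
      using sol x unfolding is_sol0_def by auto
    have df: "(f has_real_derivative g x) (at x within {0..R})"
      unfolding f_def[abs_def]
      by (rule derivative_eq_intros d1 refl)+ (use c(1) in \<open>simp add: g_def field_simps\<close>)
    have dg: "(g has_real_derivative (- c\<^sup>2 * f x)) (at x within {0..R})"
      unfolding g_def[abs_def]
      by (rule derivative_eq_intros d2 refl)+ (use c in \<open>simp add: qq f_def field_simps power2_eq_square\<close>)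
    show ?thesis unfolding E_def[abs_def]
      by (rule derivative_eq_intros df dg refl)+ (simp add: field_simps)
  qed
  obtain k where k: "\<forall>x\<in>{0..R}. E x = k"
    using has_field_derivative_zero_constant[OF convex_real_interval(5) dE] by blast
  have "E 0 = 0" by (simp add: E_def f_def g_def s0)
  hence "E R = 0" using k R by auto
  hence h: "c\<^sup>2 * (f R)\<^sup>2 + (g R)\<^sup>2 = 0" unfolding E_def .
  have "c\<^sup>2 * (f R)\<^sup>2 \<ge> 0" "(g R)\<^sup>2 \<ge> 0" by auto
  hence "c\<^sup>2 * (f R)\<^sup>2 = 0" "(g R)\<^sup>2 = 0" using h by linarith+
  hence "f R = 0" "g R = 0" using c(1) by auto
  thus ?thesis by (simp add: f_def g_def)
qed

theorem mainTheorem11: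
  fixes q R \<eta>\<^sub>0 :: real and \<phi> \<psi> :: "real \<Rightarrow> real \<Rightarrow> real"
  assumes "q > 0" and "R > 0"
    and "is_sol0 q R \<phi> \<psi>"
    and "0 < \<eta>\<^sub>0" and "\<eta>\<^sub>0 < sqrt q"
    and "F0 R \<phi> \<psi> \<eta>\<^sub>0 = 0"
  shows "let c\<^sub>0 = sqrt (q - \<eta>\<^sub>0\<^sup>2);
             D = cos (c\<^sub>0 * R) * (2 + \<eta>\<^sub>0 * R - \<eta>\<^sub>0 ^ 3 * R / c\<^sub>0\<^sup>2)
               + sin (c\<^sub>0 * R) * ((3 * \<eta>\<^sub>0 + 2 * \<eta>\<^sub>0\<^sup>2 * R) / c\<^sub>0 + \<eta>\<^sub>0 ^ 3 / c\<^sub>0 ^ 3)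
         in (F0 R \<phi> \<psi> has_real_derivative D) (at \<eta>\<^sub>0) \<and> D \<noteq> 0"
proof -
  define S where "S = {- sqrt q <..< sqrt q}"
  have inS: "\<eta>\<^sup>2 < q" if "\<eta> \<in> S" for \<eta>
  proof -
    have "\<bar>\<eta>\<bar> < sqrt q" using that by (auto simp: S_def)
    hence "\<bar>\<eta>\<bar>\<^sup>2 < (sqrt q)\<^sup>2" by (intro power_strict_mono) auto
    thus ?thesis using assms(1) by simp
  qed
  define G where "G \<eta> = (\<eta> * cos (sqrt (q - \<eta>\<^sup>2) * R) - sqrt (q - \<eta>\<^sup>2) * sin (sqrt (q - \<eta>\<^sup>2) * R))
     + \<eta> * (cos (sqrt (q - \<eta>\<^sup>2) * R) + \<eta> / sqrt (q - \<eta>\<^sup>2) * sin (sqrt (q - \<eta>\<^sup>2) * R))" for \<eta>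
  have FG: "G \<eta> = F0 R \<phi> \<psi> \<eta>" if "\<eta> \<in> S" for \<eta>
  proof -
    have "sqrt (q - \<eta>\<^sup>2) > 0" "(sqrt (q - \<eta>\<^sup>2))\<^sup>2 = q - \<eta>\<^sup>2" using inS[OF that] by auto
    from uniq[OF less_imp_le[OF assms(2)] assms(3) this] show ?thesis
      by (simp add: G_def F0_def)
  qed
  have e0S: "\<eta>\<^sub>0 \<in> S" using assms(4,5) unfolding S_def
    using real_sqrt_ge_zero[of q] assms(1) by auto
  define c where "c = sqrt (q - \<eta>\<^sub>0\<^sup>2)"
  have qe: "q - \<eta>\<^sub>0\<^sup>2 > 0" using inS[OF e0S] by simp
  have cpos: "c > 0" and c2: "c\<^sup>2 = q - \<eta>\<^sub>0\<^sup>2" using qe by (auto simp: c_def)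
  define D where "D = cos (c * R) * (2 + \<eta>\<^sub>0 * R - \<eta>\<^sub>0 ^ 3 * R / c\<^sup>2)
               + sin (c * R) * ((3 * \<eta>\<^sub>0 + 2 * \<eta>\<^sub>0\<^sup>2 * R) / c + \<eta>\<^sub>0 ^ 3 / c ^ 3)"
  define C where "C \<eta> = sqrt (q - \<eta>\<^sup>2)" for \<eta>
  have hq: "((\<lambda>x. q - x\<^sup>2) has_real_derivative - (2 * \<eta>\<^sub>0)) (at \<eta>\<^sub>0)"
    by (rule derivative_eq_intros refl)+ simp
  have hc0: "(C has_real_derivative inverse (sqrt (q - \<eta>\<^sub>0\<^sup>2)) / 2 * (- (2 * \<eta>\<^sub>0))) (at \<eta>\<^sub>0)"
    unfolding C_def[abs_def] by (rule DERIV_chain2[OF DERIV_real_sqrt[OF qe] hq])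
  have hc: "(C has_real_derivative - \<eta>\<^sub>0 / c) (at \<eta>\<^sub>0)"
    using hc0 by (simp add: c_def field_simps)
  have Cc: "C \<eta>\<^sub>0 = c" by (simp add: C_def c_def)
  have Cne: "C \<eta>\<^sub>0 \<noteq> 0" using cpos by (simp add: C_def c_def)
  have GC: "G = (\<lambda>\<eta>. (\<eta> * cos (C \<eta> * R) - C \<eta> * sin (C \<eta> * R)) + \<eta> * (cos (C \<eta> * R) + \<eta> / C \<eta> * sin (C \<eta> * R)))"
    by (simp add: G_def[abs_def] C_def)
  have dG: "(G has_real_derivative D) (at \<eta>\<^sub>0)"
    unfolding GC
    apply (rule derivative_eq_intros refl hc Cne)+
    unfolding D_def Cc
    using cpos by (simp add: field_simps power2_eq_square power3_eq_cube)
  have "D \<noteq> 0"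
  proof
    assume D0: "D = 0"
    define a where "a = cos (c * R)"
    define b where "b = sin (c * R)"
    define e where "e = \<eta>\<^sub>0"
    have ab: "a\<^sup>2 + b\<^sup>2 = 1" by (simp add: a_def b_def add.commute)
    have "G \<eta>\<^sub>0 = 0" using FG[OF e0S] assms(6) by simp
    hence G0: "(e * a - c * b) + e * (a + e / c * b) = 0"
      by (simp add: G_def c_def[symmetric] a_def b_def e_def)
    have F: "2*e*c*a = (c\<^sup>2 - e\<^sup>2)*b"
    proof -
      have "c * ((e * a - c * b) + e * (a + e / c * b)) = 0" using G0 by simp
      moreover have "c * ((e * a - c * b) + e * (a + e / c * b)) = 2*e*c*a - c\<^sup>2*b + e\<^sup>2*b"
        using cpos by (simp add: algebra_simps power2_eq_square)
      ultimately show ?thesis by (simp add: algebra_simps)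
    qed
    have "D * (2*e*c^3) = (2*e*c*a)*(2*c\<^sup>2+e*R*c\<^sup>2-e^3*R) + b*(2*e)*(3*e*c\<^sup>2+2*e\<^sup>2*R*c\<^sup>2+e^3)"
      unfolding D_def a_def[symmetric] b_def[symmetric] e_def[symmetric]
      using cpos by (simp add: field_simps power2_eq_square power3_eq_cube)
    also have "\<dots> = b * (e\<^sup>2 + c\<^sup>2)\<^sup>2 * (2 + e*R)"
      unfolding F by (simp add: algebra_simps power2_eq_square power3_eq_cube)
    finally have "b * (e\<^sup>2 + c\<^sup>2)\<^sup>2 * (2 + e*R) = 0" using D0 by simp
    moreover have "(e\<^sup>2 + c\<^sup>2)\<^sup>2 * (2 + e*R) \<noteq> 0"
    proof -
      have "e * R > 0" using assms(2,4) by (simp add: e_def)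
      thus ?thesis using cpos by simp
    qed
    ultimately have b0: "b = 0" by (metis mult.assoc mult_eq_0_iff)
    hence "a = 0" using F cpos assms(4) by (simp add: e_def)
    with b0 ab show False by simp
  qed
  show ?thesis
    using has_field_derivative_transform_within_open[OF dG _ e0S FG] 
    by (simp add: Let_def c_def[symmetric] D_def[symmetric] S_def \<open>D \<noteq> 0\<close>)
qed

end
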